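(* Let $p$ be a prime and $G=\Gamma(Tr(\mathbb{Z}_{p^2}))$. Then $$|E(G)|=\tfrac12\,p^2(p^2-1)\left(p^6+p^5-p^4-2p^2-1\right).$$
   Context: For a ring $S$ with identity whose center $Z(S)$ is not all of $S$, the commuting graph $\Gamma(S)$ is the simple graph with vertex set $S\setminus Z(S)$, in which two distinct vertices $a,b$ are adjacent iff $ab=ba$; $E(G)$ is the edge set. $Tr(R)$ denotes the ring of all $2\times 2$ upper triangular matrices over $R$. *)

theory Defs
  imports Complex_Main "HOL-Computational_Algebra.Primes"
begin

definition ring_center :: "'a set \<Rightarrow> ('a \<Rightarrow> 'a \<Rightarrow> 'a) \<Rightarrow> 'a set" where
  "ring_center S mul = {z \<in> S. \<forall>x\<in>S. mul z x = mul x z}"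

definition commuting_graph_edges :: "'a set \<Rightarrow> ('a \<Rightarrow> 'a \<Rightarrow> 'a) \<Rightarrow> 'a set set" where
  "commuting_graph_edges S mul =
     {{a, b} | a b. a \<in> S - ring_center S mul \<and> b \<in> S - ring_center S mul
                  \<and> a \<noteq> b \<and> mul a b = mul b a}"

text \<open>Tr(Z_n): upper triangular matrices [[a,b],[0,c]] over Z_n, encoded as triples (a,b,c)
  with entries in {0..<n}; multiplication is matrix multiplication mod n.\<close>
definition Tr_carrier :: "int \<Rightarrow> (int \<times> int \<times> int) set" where
  "Tr_carrier n = {(a, b, c). a \<in> {0..<n} \<and> b \<in> {0..<n} \<and> c \<in> {0..<n}}"

definition Tr_mult :: "int \<Rightarrow> (int \<times> int \<times> int) \<Rightarrow> (int \<times> int \<times> int) \<Rightarrow> (int \<times> int \<times> int)" where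
  "Tr_mult n x y = (case x of (a, b, c) \<Rightarrow> case y of (a', b', c') \<Rightarrow>
      ((a * a') mod n, (a * b' + b * c') mod n, (c * c') mod n))"

end

theory Submission
  imports Defs "HOL-Computational_Algebra.Primes"
begin

lemma unique_res:
  fixes u m t :: int
  assumes "m > 0" "coprime u m"
  shows "\<exists>r. 0 \<le> r \<and> r < m \<and> (\<forall>x. m dvd u*x - t \<longleftrightarrow> x mod m = r)"
proof -
  obtain a b where ab: "a*u + b*m = gcd u m" using bezout_int by blast
  with assms have ab1: "a*u + b*m = 1" by simp
  define r where "r = (a*t) mod m"
  have "0 \<le> r" "r < m" using assms(1) by (auto simp: r_def)
  moreover have "m dvd u*x - t \<longleftrightarrow> x mod m = r" for x
  proof
    assume h: "m dvd u*x - t"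
    have "m dvd a*(u*x - t)" using h by simp
    moreover have "a*(u*x-t) + m*(b*x) = (a*u+b*m)*x - a*t" by (simp add: algebra_simps)
    then have "x - a*t = a*(u*x-t) + m*(b*x)" using ab1 by simp
    ultimately have "m dvd x - a*t" by simp
    then show "x mod m = r" unfolding r_def by (simp add: mod_eq_dvd_iff)
  next
    assume h: "x mod m = r"
    then have "m dvd x - a*t" unfolding r_def by (simp add: mod_eq_dvd_iff)
    then have "m dvd u*(x - a*t)" by simp
    moreover have "u*(x - a*t) - m*(b*t) = u*x - (a*u+b*m)*t" by (simp add: algebra_simps)
    then have "u*x - t = u*(x - a*t) - m*(b*t)" using ab1 by simp
    ultimately show "m dvd u*x - t" by simp
  qed
  ultimately show ?thesis by blast
qed

lemma card_res:
  fixes m k r :: int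
  assumes "m > 0" "k \<ge> 0" "0 \<le> r" "r < m"
  shows "card {x\<in>{0..<m*k}. x mod m = r} = nat k"
proof -
  have "{x\<in>{0..<m*k}. x mod m = r} = (\<lambda>j. r + m*j) ` {0..<k}"
  proof (rule set_eqI, rule iffI)
    fix x assume "x \<in> {x\<in>{0..<m*k}. x mod m = r}"
    then have x: "0 \<le> x" "x < m*k" "x mod m = r" by auto
    have "x = r + m*(x div m)" using x(3) by (metis add.commute mult_div_mod_eq)
    moreover have "0 \<le> x div m" using x assms by (simp add: pos_imp_zdiv_nonneg_iff)
    moreover have "x div m < k"
    proof -
      have "m*(x div m) < m*k" using x(2) \<open>x = r + m*(x div m)\<close> assms(3) by linarith
      then show ?thesis using assms(1) by simp
    qed
    ultimately show "x \<in> (\<lambda>j. r + m*j) ` {0..<k}" by auto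
  next
    fix x assume "x \<in> (\<lambda>j. r + m*j) ` {0..<k}"
    then obtain j where j: "0 \<le> j" "j < k" "x = r + m*j" by auto
    have "j + 1 \<le> k" using j by simp
    then have "m*(j+1) \<le> m*k" using assms by (intro mult_left_mono) auto
    then have "m*j + m \<le> m*k" by (simp add: algebra_simps)
    then show "x \<in> {x\<in>{0..<m*k}. x mod m = r}" using j assms by auto
  qed
  moreover have "inj_on (\<lambda>j. r + m*j) {0..<k}" using assms by (auto simp: inj_on_def)
  ultimately show ?thesis by (simp add: card_image)
qed

lemma card_lin:
  fixes m k u t :: int
  assumes "m > 0" "k \<ge> 0" "coprime u m"
  shows "card {x\<in>{0..<m*k}. m dvd u*x - t} = nat k"
proof -
  obtain r where r: "0 \<le> r" "r < m" "\<forall>x. m dvd u*x - t \<longleftrightarrow> x mod m = r"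
    using unique_res[OF assms(1,3)] by blast
  then have "{x\<in>{0..<m*k}. m dvd u*x - t} = {x\<in>{0..<m*k}. x mod m = r}" by auto
  then show ?thesis using card_res[OF assms(1,2) r(1,2)] by simp
qed

definition phi :: "int \<Rightarrow> int\<times>int\<times>int \<Rightarrow> int\<times>int" where
  "phi n x = (case x of (a,b,c) \<Rightarrow> ((a-c) mod n, b))"
definition psi :: "int \<Rightarrow> int\<times>int\<times>int \<Rightarrow> (int\<times>int)\<times>int" where
  "psi n x = (phi n x, snd (snd x))"
definition Rel :: "int \<Rightarrow> int\<times>int \<Rightarrow> int\<times>int \<Rightarrow> bool" where
  "Rel n v w = (n dvd (snd w * fst v - snd v * fst w))"

lemma tr_comm:
  "Tr_mult n x y = Tr_mult n y x \<longleftrightarrow> Rel n (phi n x) (phi n y)"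
proof -
  obtain a b c where x: "x = (a,b,c)" by (cases x) auto
  obtain a' b' c' where y: "y = (a',b',c')" by (cases y) auto
  have l: "Tr_mult n x y = Tr_mult n y x \<longleftrightarrow> n dvd (a*b'+b*c') - (a'*b+b'*c)"
    unfolding x y Tr_mult_def by (simp add: mod_eq_dvd_iff mult.commute)
  have m1: "(a-c) mod n = (a-c) - n*((a-c) div n)" by (simp add: minus_div_mult_eq_mod[symmetric] algebra_simps)
  have m2: "(a'-c') mod n = (a'-c') - n*((a'-c') div n)" by (simp add: minus_div_mult_eq_mod[symmetric] algebra_simps)
  have e: "b'*((a-c) mod n) - b*((a'-c') mod n) = ((a*b'+b*c') - (a'*b+b'*c)) - n*(b'*((a-c) div n) - b*((a'-c') div n))"
    unfolding m1 m2 by (simp add: algebra_simps)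
  have r: "Rel n (phi n x) (phi n y) \<longleftrightarrow> n dvd b'*((a-c) mod n) - b*((a'-c') mod n)"
    unfolding Rel_def phi_def x y by simp
  show ?thesis unfolding l r e by (subst dvd_diff_left_iff) auto
qed


lemma psi_bij:
  assumes "n > 0"
  shows "bij_betw (psi n) (Tr_carrier n) (({0..<n}\<times>{0..<n})\<times>{0..<n})"
  unfolding bij_betw_def
proof
  show "inj_on (psi n) (Tr_carrier n)"
  proof (rule inj_onI)
    fix x y assume xS: "x \<in> Tr_carrier n" and yS: "y \<in> Tr_carrier n" and e: "psi n x = psi n y"
    obtain a b c where x: "x = (a,b,c)" by (cases x) auto
    obtain a' b' c' where y: "y = (a',b',c')" by (cases y) auto
    have bc: "b = b'" "c = c'" and m: "(a-c) mod n = (a'-c') mod n"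
      using e unfolding x y psi_def phi_def by auto
    have "n dvd (a-c) - (a'-c)" using m bc mod_eq_dvd_iff by metis
    then have "n dvd a - a'" by simp
    then have "a mod n = a' mod n" by (simp add: mod_eq_dvd_iff)
    moreover have "a mod n = a" "a' mod n = a'" using xS yS unfolding x y Tr_carrier_def by auto
    ultimately show "x = y" using bc x y by simp
  qed
next
  show "psi n ` Tr_carrier n = ({0..<n}\<times>{0..<n})\<times>{0..<n}"
  proof
    show "psi n ` Tr_carrier n \<subseteq> ({0..<n}\<times>{0..<n})\<times>{0..<n}"
      using assms by (auto simp: psi_def phi_def Tr_carrier_def)
  next
    show "({0..<n}\<times>{0..<n})\<times>{0..<n} \<subseteq> psi n ` Tr_carrier n"
    proof
      fix z assume z: "z \<in> ({0..<n}\<times>{0..<n})\<times>{0..<n}"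
      obtain d b c where zz: "z = ((d,b),c)" by (metis prod.collapse)
      have "((d+c) mod n - c) mod n = d" using z zz by (simp add: mod_diff_left_eq)
      then have "psi n ((d+c) mod n, b, c) = z" using zz by (simp add: psi_def phi_def)
      moreover have "((d+c) mod n, b, c) \<in> Tr_carrier n" using z zz assms by (simp add: Tr_carrier_def)
      ultimately show "z \<in> psi n ` Tr_carrier n" by (metis image_eqI)
    qed
  qed
qed

lemma psi_bij_restr:
  assumes "n > 0"
  shows "bij_betw (psi n) {x\<in>Tr_carrier n. P (phi n x)} ({v\<in>{0..<n}\<times>{0..<n}. P v} \<times> {0..<n})"
proof (rule bij_betw_subset[OF psi_bij[OF assms]])
  show "{x\<in>Tr_carrier n. P (phi n x)} \<subseteq> Tr_carrier n" by auto
  have im: "psi n ` Tr_carrier n = ({0..<n}\<times>{0..<n})\<times>{0..<n}"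
    using psi_bij[OF assms] by (simp add: bij_betw_def)
  have "psi n ` {x\<in>Tr_carrier n. P (phi n x)} = {z \<in> psi n ` Tr_carrier n. P (fst z)}"
    by (auto simp: psi_def)
  then show "psi n ` {x\<in>Tr_carrier n. P (phi n x)} = {v\<in>{0..<n}\<times>{0..<n}. P v} \<times> {0..<n}"
    unfolding im by auto
qed

lemma card_restr:
  assumes "n > 0"
  shows "card {x\<in>Tr_carrier n. P (phi n x)} = card {v\<in>{0..<n}\<times>{0..<n}. P v} * nat n"
  using bij_betw_same_card[OF psi_bij_restr[OF assms]] by (simp add: card_cartesian_product)

lemma sum_restr:
  fixes h :: "int\<times>int \<Rightarrow> int"
  assumes "n > 0"
  shows "(\<Sum>x\<in>{x\<in>Tr_carrier n. P (phi n x)}. h (phi n x)) = n * (\<Sum>v\<in>{v\<in>{0..<n}\<times>{0..<n}. P v}. h v)"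
proof -
  have "(\<Sum>x\<in>{x\<in>Tr_carrier n. P (phi n x)}. h (phi n x)) = (\<Sum>x\<in>{x\<in>Tr_carrier n. P (phi n x)}. (h \<circ> fst) (psi n x))"
    by (simp add: psi_def)
  also have "\<dots> = (\<Sum>z\<in>{v\<in>{0..<n}\<times>{0..<n}. P v} \<times> {0..<n}. (h \<circ> fst) z)"
    by (rule sum.reindex_bij_betw[OF psi_bij_restr[OF assms]])
  also have "\<dots> = (\<Sum>(v,c)\<in>{v\<in>{0..<n}\<times>{0..<n}. P v} \<times> {0..<n}. h v)"
    by (rule sum.cong) auto
  also have "\<dots> = (\<Sum>v\<in>{v\<in>{0..<n}\<times>{0..<n}. P v}. \<Sum>c\<in>{0..<n}. h v)"
    by (rule sum.cartesian_product[symmetric])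
  also have "\<dots> = (\<Sum>v\<in>{v\<in>{0..<n}\<times>{0..<n}. P v}. n * h v)"
    using assms by simp
  finally show ?thesis by (simp add: sum_distrib_left)
qed

lemma center_eq:
  assumes "n > 1"
  shows "ring_center (Tr_carrier n) (Tr_mult n) = {x\<in>Tr_carrier n. phi n x = (0,0)}"
proof (rule set_eqI, rule iffI)
  fix z assume z: "z \<in> ring_center (Tr_carrier n) (Tr_mult n)"
  then have zS: "z \<in> Tr_carrier n" and zc: "\<forall>x\<in>Tr_carrier n. Tr_mult n z x = Tr_mult n x z"
    by (auto simp: ring_center_def)
  obtain d b where db: "phi n z = (d,b)" by fastforce
  have d: "0 \<le> d" "d < n" "0 \<le> b" "b < n" using zS db assms
    by (auto simp: phi_def Tr_carrier_def split: prod.splits)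
  have "(1,0,0) \<in> Tr_carrier n" "(0,1,0) \<in> Tr_carrier n" using assms by (auto simp: Tr_carrier_def)
  then have "Rel n (phi n z) (phi n (1,0,0))" "Rel n (phi n z) (phi n (0,1,0))"
    using zc tr_comm by blast+
  then have "n dvd b" "n dvd d" using db assms by (auto simp: Rel_def phi_def)
  then have "b = 0" "d = 0" using d by (metis dvd_eq_mod_eq_0 mod_pos_pos_trivial)+
  then show "z \<in> {x\<in>Tr_carrier n. phi n x = (0,0)}" using zS db by simp
next
  fix z assume "z \<in> {x\<in>Tr_carrier n. phi n x = (0,0)}"
  then show "z \<in> ring_center (Tr_carrier n) (Tr_mult n)"
    unfolding ring_center_def by (auto simp: tr_comm Rel_def)
qed


lemma card_upairs:
  assumes "finite A" "\<And>a b. R a b \<Longrightarrow> R b a"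
  shows "card {(a,b). a\<in>A \<and> b\<in>A \<and> a\<noteq>b \<and> R a b}
       = 2 * card {{a,b}|a b. a\<in>A \<and> b\<in>A \<and> a\<noteq>b \<and> R a b}"
proof -
  define E where "E = {{a,b}|a b. a\<in>A \<and> b\<in>A \<and> a\<noteq>b \<and> R a b}"
  define F where "F e = {(a,b). {a,b} = e \<and> a \<noteq> b}" for e :: "'a set"
  have O: "{(a,b). a\<in>A \<and> b\<in>A \<and> a\<noteq>b \<and> R a b} = \<Union>(F ` E)"
  proof (rule set_eqI, rule iffI)
    fix z assume "z \<in> {(a,b). a\<in>A \<and> b\<in>A \<and> a\<noteq>b \<and> R a b}"
    then obtain a b where "z = (a,b)" "a\<in>A" "b\<in>A" "a\<noteq>b" "R a b" by auto
    then show "z \<in> \<Union>(F ` E)" unfolding E_def F_def by blast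
  next
    fix z assume "z \<in> \<Union>(F ` E)"
    then obtain e a b where e: "e \<in> E" "z = (a,b)" "{a,b} = e" "a \<noteq> b" unfolding F_def by auto
    then obtain x y where xy: "e = {x,y}" "x\<in>A" "y\<in>A" "x\<noteq>y" "R x y" unfolding E_def by auto
    then have "(a = x \<and> b = y) \<or> (a = y \<and> b = x)" using e by (metis doubleton_eq_iff)
    then show "z \<in> {(a,b). a\<in>A \<and> b\<in>A \<and> a\<noteq>b \<and> R a b}" using xy e assms(2) by auto
  qed
  have finE: "finite E" using assms(1) by (rule finite_subset[rotated, OF finite_Pow_iff[THEN iffD2]]) (auto simp: E_def)
  have c2: "card (F e) = 2" if eE: "e \<in> E" for e
  proof -
    obtain x y where xy: "e = {x,y}" "x\<noteq>y" using eE unfolding E_def by blast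
    have "F e = {(x,y),(y,x)}" unfolding F_def xy(1) using xy(2) by (auto simp: doubleton_eq_iff)
    then show ?thesis using xy(2) by simp
  qed
  have finF: "\<forall>e\<in>E. finite (F e)" using c2 by (metis card.infinite zero_neq_numeral)
  have disj: "\<forall>e\<in>E. \<forall>e'\<in>E. e \<noteq> e' \<longrightarrow> F e \<inter> F e' = {}" unfolding F_def by auto
  have "card (\<Union>(F ` E)) = (\<Sum>e\<in>E. card (F e))" by (rule card_UN_disjoint[OF finE finF disj])
  also have "\<dots> = (\<Sum>e\<in>E. 2)" using c2 by simp
  finally show ?thesis unfolding O E_def by simp
qed

lemma card_sigma_lin:
  fixes m k u t N :: int
  assumes "m > 0" "k \<ge> 0" "coprime u m" "N \<ge> 0"
  shows "card {(x,y). x\<in>{0..<N} \<and> y\<in>{0..<m*k} \<and> m dvd u*y - t*x} = nat N * nat k"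
proof -
  have "{(x,y). x\<in>{0..<N} \<and> y\<in>{0..<m*k} \<and> m dvd u*y - t*x}
      = Sigma {0..<N} (\<lambda>x. {y\<in>{0..<m*k}. m dvd u*y - (t*x)})" by auto
  moreover have "card (Sigma {0..<N} (\<lambda>x. {y\<in>{0..<m*k}. m dvd u*y - (t*x)})) = (\<Sum>x\<in>{0..<N}. nat k)"
    using card_lin[OF assms(1-3)] by (subst card_SigmaI) (auto intro: finite_subset[of _ "{0..<m*k}"])
  ultimately show ?thesis using assms(4) by simp
qed

lemma card_sigma_lin_swap:
  fixes m k u t N :: int
  assumes "m > 0" "k \<ge> 0" "coprime u m" "N \<ge> 0"
  shows "card {(y,x). x\<in>{0..<N} \<and> y\<in>{0..<m*k} \<and> m dvd u*y - t*x} = nat N * nat k"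
proof -
  have "{(y,x). x\<in>{0..<N} \<and> y\<in>{0..<m*k} \<and> m dvd u*y - t*x}
     = prod.swap ` {(x,y). x\<in>{0..<N} \<and> y\<in>{0..<m*k} \<and> m dvd u*y - t*x}" by auto
  then show ?thesis using card_sigma_lin[OF assms] by (simp add: card_image)
qed

definition K :: "int \<Rightarrow> int\<times>int \<Rightarrow> nat" where
  "K n v = card {w\<in>{0..<n}\<times>{0..<n}. Rel n v w}"

lemma K_unit1:
  assumes "n > 0" "coprime d n"
  shows "K n (d,b) = nat n"
proof -
  have "{w\<in>{0..<n}\<times>{0..<n}. Rel n (d,b) w} = {(x,y). x\<in>{0..<n} \<and> y\<in>{0..<n*1} \<and> n dvd d*y - b*x}"
    by (auto simp: Rel_def mult.commute)
  then show ?thesis unfolding K_def using card_sigma_lin[OF assms(1) _ assms(2), of 1 n b] assms by simp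
qed

lemma K_unit2:
  assumes "n > 0" "coprime b n"
  shows "K n (d,b) = nat n"
proof -
  have "n dvd y*d - b*x \<longleftrightarrow> n dvd b*x - d*y" for x y
  proof -
    have e: "b*x - d*y = - (y*d - b*x)" by (simp add: algebra_simps)
    show ?thesis by (simp only: e dvd_minus_iff)
  qed
  then have "{w\<in>{0..<n}\<times>{0..<n}. Rel n (d,b) w} = {(x,y). y\<in>{0..<n} \<and> x\<in>{0..<n*1} \<and> n dvd b*x - d*y}"
    by (auto simp: Rel_def)
  then show ?thesis unfolding K_def using card_sigma_lin_swap[OF assms(1) _ assms(2), of 1 n d] assms by simp
qed

lemma K_p:
  fixes P d b :: int
  assumes P: "prime P" and v: "(d,b) \<in> {0..<P*P}\<times>{0..<P*P}" "P dvd d" "P dvd b" "(d,b) \<noteq> (0,0)"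
  shows "K (P*P) (d,b) = nat (P*P*P)"
proof -
  have P0: "P > 1" using P prime_gt_1_int by blast
  obtain d1 b1 where d1: "d = P*d1" and b1: "b = P*b1" using v by (auto elim!: dvdE)
  have rel: "Rel (P*P) (d,b) (x,y) \<longleftrightarrow> P dvd d1*y - b1*x" for x y
  proof -
    have "y*d - b*x = P*(d1*y - b1*x)" unfolding d1 b1 by (simp add: algebra_simps)
    then show ?thesis unfolding Rel_def using P0 by simp
  qed
  have "\<not> (P dvd d1 \<and> P dvd b1)"
  proof
    assume h: "P dvd d1 \<and> P dvd b1"
    then have "P*P dvd d" "P*P dvd b" unfolding d1 b1 by auto
    then have "d = 0" "b = 0" using v(1) by (metis dvd_eq_mod_eq_0 mod_pos_pos_trivial mem_Sigma_iff atLeastLessThan_iff)+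
    then show False using v(4) by simp
  qed
  then consider "\<not> P dvd d1" | "\<not> P dvd b1" by blast
  then show ?thesis
  proof cases
    case 1
    then have cp: "coprime d1 P" using prime_imp_coprime[OF P 1] coprime_commute by blast
    have "{w\<in>{0..<P*P}\<times>{0..<P*P}. Rel (P*P) (d,b) w} = {(x,y). x\<in>{0..<P*P} \<and> y\<in>{0..<P*P} \<and> P dvd d1*y - b1*x}"
      using rel by auto
    then show ?thesis unfolding K_def using card_sigma_lin[of P P d1 "P*P" b1] cp P0
      by (simp add: nat_mult_distrib)
  next
    case 2
    then have cp: "coprime b1 P" using prime_imp_coprime[OF P 2] coprime_commute by blast
    have "P dvd d1*y - b1*x \<longleftrightarrow> P dvd b1*x - d1*y" for x y
    proof -
      have e: "b1*x - d1*y = - (d1*y - b1*x)" by (simp add: algebra_simps)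
      show ?thesis by (simp only: e dvd_minus_iff)
    qed
    then have "{w\<in>{0..<P*P}\<times>{0..<P*P}. Rel (P*P) (d,b) w} = {(x,y). y\<in>{0..<P*P} \<and> x\<in>{0..<P*P} \<and> P dvd b1*x - d1*y}"
      using rel by auto
    then show ?thesis unfolding K_def using card_sigma_lin_swap[of P P b1 "P*P" d1] cp P0
      by (simp add: nat_mult_distrib)
  qed
qed


lemma Tr_carrier_eq: "Tr_carrier n = {0..<n}\<times>{0..<n}\<times>{0..<n}"
  by (auto simp: Tr_carrier_def)

lemma main_int:
  fixes P :: int
  assumes Pp: "prime P"
  defines "n \<equiv> P*P"
  shows "2 * int (card (commuting_graph_edges (Tr_carrier n) (Tr_mult n)))
       = n*((n*n - P*P)*(n*n - n - 1) + (P*P-1)*(P*P*P*n - n - 1))"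
proof -
  have P1: "P > 1" using Pp prime_gt_1_int by blast
  have n1: "n > 1" unfolding n_def using P1 by (metis less_1_mult)
  have n0: "n > 0" using n1 by simp
  define S where "S = Tr_carrier n"
  define V where "V = {x\<in>S. phi n x \<noteq> (0,0)}"
  define Z where "Z = {x\<in>S. phi n x = (0,0)}"
  define Q where "Q = {0..<n}\<times>{0..<n}"
  have finS: "finite S" unfolding S_def Tr_carrier_eq by simp
  have finV: "finite V" using finS unfolding V_def by simp
  have cZ: "ring_center S (Tr_mult n) = Z" unfolding S_def Z_def using center_eq[OF n1] .
  have SV: "S - Z = V" unfolding V_def Z_def by auto
  have E: "commuting_graph_edges S (Tr_mult n) =
     {{a,b}|a b. a\<in>V \<and> b\<in>V \<and> a\<noteq>b \<and> Tr_mult n a b = Tr_mult n b a}"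
    unfolding commuting_graph_edges_def cZ SV ..
  define Ord where "Ord = {(a,b). a\<in>V \<and> b\<in>V \<and> a\<noteq>b \<and> Tr_mult n a b = Tr_mult n b a}"
  have cO: "card Ord = 2 * card (commuting_graph_edges S (Tr_mult n))"
    unfolding Ord_def E by (rule card_upairs[OF finV]) simp
  have OS: "Ord = Sigma V (\<lambda>x. {y\<in>V. x\<noteq>y \<and> Tr_mult n x y = Tr_mult n y x})"
    unfolding Ord_def by auto
  have cZn: "card Z = nat n"
  proof -
    have "card Z = card {v\<in>{0..<n}\<times>{0..<n}. v = (0,0)} * nat n"
      unfolding Z_def S_def by (rule card_restr[OF n0])
    also have "{v\<in>{0..<n}\<times>{0..<n}. v = (0,0)} = {(0,0)}" using n0 by auto
    finally show ?thesis by simp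
  qed
  have row: "int (card {y\<in>V. x\<noteq>y \<and> Tr_mult n x y = Tr_mult n y x})
       = int (K n (phi n x)) * n - n - 1" if xV: "x \<in> V" for x
  proof -
    define A where "A = {y\<in>S. Rel n (phi n x) (phi n y)}"
    have cA: "card A = K n (phi n x) * nat n"
      unfolding A_def S_def K_def by (rule card_restr[OF n0])
    have eq: "{y\<in>V. x\<noteq>y \<and> Tr_mult n x y = Tr_mult n y x} = (A - Z) - {x}"
      unfolding A_def V_def Z_def using tr_comm by auto
    have ZA: "Z \<subseteq> A" unfolding Z_def A_def by (auto simp: Rel_def)
    have xA: "x \<in> A - Z" using xV unfolding A_def V_def Z_def by (auto simp: Rel_def)
    have finA: "finite A" unfolding A_def using finS by simp
    have "card ((A - Z) - {x}) = card A - card Z - 1"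
      using xA finA ZA card_Diff_subset[OF finite_subset[OF ZA finA] ZA] by simp
    moreover have "card Z + 1 \<le> card A"
    proof -
      have "Z \<subset> A" using ZA xA by blast
      then have "card Z < card A" using finA psubset_card_mono by blast
      then show ?thesis by simp
    qed
    ultimately show ?thesis unfolding eq using cA cZn n0 by (simp add: of_nat_diff)
  qed
  have "int (card Ord) = (\<Sum>x\<in>V. int (card {y\<in>V. x\<noteq>y \<and> Tr_mult n x y = Tr_mult n y x}))"
    unfolding OS using finV by (subst card_SigmaI) (auto simp: of_nat_sum)
  also have "\<dots> = (\<Sum>x\<in>V. int (K n (phi n x)) * n - n - 1)" using row by simp
  also have "\<dots> = n * (\<Sum>v\<in>{v\<in>Q. v \<noteq> (0,0)}. int (K n v) * n - n - 1)"
    unfolding V_def S_def Q_def by (rule sum_restr[OF n0])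
  finally have sO: "int (card Ord) = n * (\<Sum>v\<in>{v\<in>Q. v \<noteq> (0,0)}. int (K n v) * n - n - 1)" .
  define B where "B = {v\<in>Q. P dvd fst v \<and> P dvd snd v}"
  define U where "U = Q - B"
  define D where "D = B - {(0,0)}"
  have finQ: "finite Q" unfolding Q_def by simp
  have BQ: "B \<subseteq> Q" unfolding B_def by auto
  have B0: "(0,0) \<in> B" unfolding B_def Q_def using n0 by auto
  have cQ: "card Q = nat n * nat n" unfolding Q_def by (simp add: card_cartesian_product)
  have cB: "card B = nat P * nat P"
  proof -
    have c1: "card {d\<in>{0..<P*P}. P dvd 1*d - 0} = nat P"
      by (rule card_lin) (use P1 in auto)
    have "B = {d\<in>{0..<P*P}. P dvd 1*d - 0} \<times> {d\<in>{0..<P*P}. P dvd 1*d - 0}"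
      unfolding B_def Q_def n_def by auto
    then show ?thesis using c1 by (simp add: card_cartesian_product)
  qed
  have cU: "int (card U) = n*n - P*P"
  proof -
    have "card U = card Q - card B" unfolding U_def using BQ finQ by (simp add: card_Diff_subset finite_subset)
    moreover have "card B \<le> card Q" using BQ finQ by (simp add: card_mono)
    ultimately show ?thesis using cQ cB n0 P1 unfolding n_def by (simp add: of_nat_diff)
  qed
  have cD: "int (card D) = P*P - 1"
  proof -
    have "card D = card B - 1" unfolding D_def using B0 by simp
    then show ?thesis using cB P1 by (simp add: of_nat_diff)
  qed
  have split: "{v\<in>Q. v \<noteq> (0,0)} = U \<union> D" unfolding U_def D_def B_def by auto
  have disj: "U \<inter> D = {}" unfolding U_def D_def by auto
  have finU: "finite U" "finite D" unfolding U_def D_def B_def using finQ by auto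
  have KU: "K n v = nat n" if "v \<in> U" for v
  proof -
    obtain d b where v: "v = (d,b)" by fastforce
    have "\<not> P dvd d \<or> \<not> P dvd b" using that unfolding U_def B_def v by auto
    then show ?thesis
    proof
      assume "\<not> P dvd d"
      then have "coprime d P" using prime_imp_coprime[OF Pp] coprime_commute by blast
      then have "coprime d n" unfolding n_def by simp
      then show ?thesis unfolding v by (rule K_unit1[OF n0])
    next
      assume "\<not> P dvd b"
      then have "coprime b P" using prime_imp_coprime[OF Pp] coprime_commute by blast
      then have "coprime b n" unfolding n_def by simp
      then show ?thesis unfolding v by (rule K_unit2[OF n0])
    qed
  qed
  have KD: "K n v = nat (P*P*P)" if "v \<in> D" for v
  proof -
    obtain d b where v: "v = (d,b)" by fastforce
    show ?thesis unfolding v n_def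
      by (rule K_p[OF Pp]) (use that in \<open>auto simp: v D_def B_def Q_def n_def\<close>)
  qed
  have "(\<Sum>v\<in>{v\<in>Q. v \<noteq> (0,0)}. int (K n v) * n - n - 1)
      = (\<Sum>v\<in>U. int (K n v) * n - n - 1) + (\<Sum>v\<in>D. int (K n v) * n - n - 1)"
    unfolding split using finU disj by (rule sum.union_disjoint)
  also have "\<dots> = (\<Sum>v\<in>U. n * n - n - 1) + (\<Sum>v\<in>D. P*P*P * n - n - 1)"
    using KU KD n0 P1 by simp
  also have "\<dots> = int (card U) * (n*n - n - 1) + int (card D) * (P*P*P*n - n - 1)"
    by simp
  finally have "int (card Ord) = n * ((n*n - P*P)*(n*n - n - 1) + (P*P-1)*(P*P*P*n - n - 1))"
    using sO cU cD by simp
  then show ?thesis using cO unfolding S_def by simp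
qed


theorem mainTheorem9:
  fixes p :: nat
  assumes "prime p"
  shows "real (card (commuting_graph_edges (Tr_carrier (int p ^ 2)) (Tr_mult (int p ^ 2))))
         = 1/2 * real p ^ 2 * (real p ^ 2 - 1) * (real p ^ 6 + real p ^ 5 - real p ^ 4 - 2 * real p ^ 2 - 1)"
proof -
  define P where "P = int p"
  have Pp: "prime P" using assms unfolding P_def by (simp add: prime_nat_int_transfer)
  have e: "int p ^ 2 = P * P" unfolding P_def by (simp add: power2_eq_square)
  define c where "c = card (commuting_graph_edges (Tr_carrier (P*P)) (Tr_mult (P*P)))"
  have h: "2 * int c = (P*P)*(((P*P)*(P*P) - P*P)*((P*P)*(P*P) - (P*P) - 1) + (P*P-1)*(P*P*P*(P*P) - (P*P) - 1))"
    unfolding c_def by (rule main_int[OF Pp])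
  have X: "(P*P)*(((P*P)*(P*P) - P*P)*((P*P)*(P*P) - (P*P) - 1) + (P*P-1)*(P*P*P*(P*P) - (P*P) - 1))
      = P^2*(P^2-1)*(P^6+P^5-P^4-2*P^2-1)" by algebra
  have "2 * int c = P^2*(P^2-1)*(P^6+P^5-P^4-2*P^2-1)" using h X by simp
  then have "real_of_int (2 * int c) = real_of_int (P^2*(P^2-1)*(P^6+P^5-P^4-2*P^2-1))" by simp
  then have "2 * real c = real p ^ 2 * (real p ^ 2 - 1) * (real p ^ 6 + real p ^ 5 - real p ^ 4 - 2 * real p ^ 2 - 1)"
    unfolding P_def by simp
  then show ?thesis unfolding e c_def[symmetric] by simp
qed

end
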